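(* Let $P,N_0,B>0$, $\mathrm{SNR}=\frac{P}{BN_0}<1$, $\alpha\in(0,1]$, $\epsilon\in(0,\alpha)$, $\delta=\mathrm{SNR}^{1-\alpha}$, and $L_c=B_cT_c$. If there exists $\sigma\in(0,\epsilon)$ such that \[ L_c=\frac{N_{\mathrm{t}}^2}{(N_\mathrm{r}+N_\mathrm{t})^2}\mathrm{SNR}^{-2(\sigma+\alpha)}, \] then \[ \delta B <\frac{P}{N_0}\frac{N_\mathrm{r}+N_\mathrm{t}}{N_\mathrm{t}}\sqrt{B_cT_c}\qquad\text{and}\qquad \delta B^{1+\epsilon} >\left(\frac{P}{N_0}\right)^{1+\epsilon}\frac{N_\mathrm{r}+N_\mathrm{t}}{N_\mathrm{t}}\sqrt{B_cT_c}. \]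
   Context: $P$ is the average transmit power, $N_0$ the noise power spectral density, $B$ the bandwidth, $N_{\mathrm{t}},N_{\mathrm{r}}$ the numbers of transmit and receive antennas, $T_c$ the coherence time and $B_c$ the coherence bandwidth of a block-fading channel, $L_c=B_cT_c$ the coherence length, and $\delta\in(0,1]$ the transmission duty cycle (peakiness parameter). *)

theory Defs
  imports "HOL-Analysis.Analysis"
begin

end

theory Submission
  imports Defs
begin

theorem corollary3:
  fixes P N0 B Bc Tc Lc alpha eps delta SNR :: real and Nt Nr :: nat
  assumes "P > 0" and "N0 > 0" and "B > 0"
    and "Bc > 0" and "Tc > 0"
    and "Nt \<ge> 1" and "Nr \<ge> 1"
    and "SNR = P / (B * N0)" and "SNR < 1"
    and "0 < alpha" and "alpha \<le> 1"
    and "0 < eps" and "eps < alpha"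
    and "delta = SNR powr (1 - alpha)"
    and "Lc = Bc * Tc"
    and "\<exists>sigma. 0 < sigma \<and> sigma < eps \<and>
           Lc = (real Nt)^2 / (real Nr + real Nt)^2 * SNR powr (- 2 * (sigma + alpha))"
  shows "delta * B < P / N0 * ((real Nr + real Nt) / real Nt) * sqrt (Bc * Tc)
       \<and> delta * B powr (1 + eps) >
           (P / N0) powr (1 + eps) * ((real Nr + real Nt) / real Nt) * sqrt (Bc * Tc)"
proof -
  obtain sg where sg: "0 < sg" "sg < eps"
    and L: "Lc = (real Nt)^2 / (real Nr + real Nt)^2 * SNR powr (- 2 * (sg + alpha))"
    using assms(16) by blast
  define s where "s = SNR"
  define c where "c = (real Nr + real Nt) / real Nt"
  have s0: "s > 0" unfolding s_def assms(8) using assms(1-3) by simp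
  have s1: "s < 1" unfolding s_def using assms(9) .
  have c0: "c > 0" unfolding c_def using assms(6) by simp
  have e2: "s powr (- 2 * (sg + alpha)) = (s powr (-(sg+alpha)))^2"
  proof -
    have "(s powr (-(sg+alpha)))^2 = s powr (-(sg+alpha)) * s powr (-(sg+alpha))"
      by (simp add: power2_eq_square)
    also have "\<dots> = s powr (- 2 * (sg + alpha))" using s0 by (simp add: powr_add[symmetric])
    finally show ?thesis by simp
  qed
  have "Bc * Tc = (real Nt / (real Nr + real Nt))^2 * (s powr (-(sg+alpha)))^2"
    using L assms(15) e2 unfolding s_def by (simp add: power_divide)
  also have "\<dots> = (s powr (-(sg+alpha)) / c)^2"
    unfolding c_def by (simp add: power_mult_distrib[symmetric])
  finally have sq: "sqrt (Bc*Tc) = s powr (-(sg+alpha)) / c"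
    using c0 s0 by simp
  have PN: "P / N0 = s * B" unfolding s_def assms(8) using assms(2,3) by simp
  have ss: "s * s powr (-(sg+alpha)) = s powr (1 - alpha - sg)"
    using s0 powr_add[of s 1 "-(sg+alpha)"] by (simp add: algebra_simps)
  have r1: "P / N0 * c * sqrt (Bc*Tc) = B * s powr (1 - alpha - sg)"
    unfolding sq PN using c0 ss by (metis mult.commute mult.left_commute nonzero_mult_div_cancel_left order_less_irrefl times_divide_eq_right)
  have r2: "(P / N0) powr (1 + eps) * c * sqrt (Bc*Tc)
      = B powr (1+eps) * s powr (1 - alpha + (eps - sg))"
  proof -
    have a: "(P / N0) powr (1 + eps) = s powr (1+eps) * B powr (1+eps)"
      unfolding PN using s0 assms(3) by (simp add: powr_mult)
    have b: "s powr (1+eps) * s powr (-(sg+alpha)) = s powr (1 - alpha + (eps - sg))"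
      using s0 powr_add[of s "1+eps" "-(sg+alpha)"] by (simp add: algebra_simps)
    show ?thesis unfolding a sq using c0 b
      by (metis mult.commute mult.left_commute nonzero_mult_div_cancel_left order_less_irrefl times_divide_eq_right)
  qed
  have i1: "s powr (1 - alpha) < s powr (1 - alpha - sg)"
    using s0 s1 sg by (intro powr_less_mono') auto
  have i2: "s powr (1 - alpha + (eps - sg)) < s powr (1 - alpha)"
    using s0 s1 sg by (intro powr_less_mono') auto
  have Bp: "B powr (1+eps) > 0" using assms(3) by simp
  have d: "delta = s powr (1 - alpha)" unfolding s_def using assms(14) .
  show ?thesis
    unfolding c_def[symmetric] r1 r2 d
    using mult_strict_left_mono[OF i1 assms(3)] mult_strict_left_mono[OF i2 Bp]
    by (simp add: mult.commute)
qed

end
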